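(* Let $\mathsf{Op}$ be an operational theory and $\widetilde{\mathsf{Op}}$ the GPT obtained from $\mathsf{Op}$ by quotienting. The following are equivalent: (i) there exists a noncontextual ontological model $\xi_{\mathrm{nc}}:\mathsf{Op}\to\mathbf{SubStoch}$ of $\mathsf{Op}$; (ii) there exists an ontological model $\widetilde\xi:\widetilde{\mathsf{Op}}\to\mathbf{SubStoch}$ of $\widetilde{\mathsf{Op}}$; (iii) there exists a positive quasiprobabilistic model $\hat\xi^+:\widetilde{\mathsf{Op}}\to\mathbf{QuasiSubStoch}$ of $\widetilde{\mathsf{Op}}$.
   Context: A process theory consists of systems (closed under a composition $A\otimes B$, with a trivial system $I$) and processes $T:A\to B$, closed under sequential composition $\circ$ and parallel composition $\otimes$ and containing identities; processes $I\to A$ are states, $A\to I$ effects, $I\to I$ closed diagrams. An operational theory is a process theory $\mathsf{Op}$ (of laboratory procedures) with a probability rule $p$ assigning to each closed diagram $D$ a number $p(D)\in[0,1]$, with $p(D_1\otimes D_2)=p(D_1)p(D_2)$. A tester for type $A\to B$ is a triple $\tau=(s,e,W)$: a system $W$, a process $s:I\to A\otimes W$ and $e:B\otimes W\to I$; $\tau[T]:=e\circ(T\otimes\mathrm{id}_W)\circ s$. Processes $T,T':A\to B$ are operationally equivalent, $T\simeq T'$, iff $p(\tau[T])=p(\tau[T'])$ for all testers. Standing assumptions: mixtures of any two processes of the same type with any weights $\omega,1-\omega$ exist as processes $T_1$ with $p(\tau[T_1])=\omega p(\tau[T_2])+(1-\omega)p(\tau[T_3])$ for all $\tau$; coarse-grainings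 of effects add probabilities; all deterministic effects on a system are operationally equivalent; finitely many testers suffice to decide $\simeq$ for each type. The associated GPT $\widetilde{\mathsf{Op}}$ has the same systems and as processes the equivalence classes $\widetilde T$ under $\simeq$, composed via representatives; closed diagrams are identified with their probabilities; classes are identified with vectors of probabilities on a finite tomographically complete set of testers, giving meaning to linear combinations, and mixtures give convex combinations $\widetilde T_1=\omega\widetilde T_2+(1-\omega)\widetilde T_3$. The class of deterministic effects on $A$ is $u_A$. $\mathbf{QuasiSubStoch}$ has systems $\mathbb{R}^\Lambda$ for finite sets $\Lambda$ (with $\mathbb{R}^\Lambda\otimes\mathbb{R}^{\Lambda'}=\mathbb{R}^{\Lambda\times\Lambda'}$, trivial system $\mathbb{R}$) and processes given by real matrices $f(\lambda'|\lambda)$ (linear maps), composed by composition and tensor product; $\mathbf{SubStoch}$ is its subtheory of substochastic maps ($f(\lambda'|\lambda)\in[0,1]$, $\sum_{\lambda'}f(\lambda'|\lambda)\le1$). $\mathbf{1}_\Lambda$ is the all-ones covector. A diagram-preserving map into $\mathbf{QuasiSubStoch}$ (resp. $\mathbf{SubStoch}$) sends each system $A$ to some $\mathbb{R}^{\Lambda_A}$, composites to tensor products, $I$ to $\mathbb{R}$, processes to processes of matching type, preserving $\circ$, $\otimes$ and identities. An ontological model of $\mathsf{Op}$ is a diagram-preserving $\xi:\mathsf{Op}\to\mathbf{SubStoch}$ mapping every deterministic effect on $A$ to $\mathbf{1}_{\Lambda_A}$, reproducing $p$ on closed diagrams, and preserving mixtures and coarse-grainings; it is noncontextual if $T\simeq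 T'\Rightarrow\xi(T)=\xi(T')$. An ontological model (resp. quasiprobabilistic model) of $\widetilde{\mathsf{Op}}$ is a diagram-preserving map $\widetilde{\mathsf{Op}}\to\mathbf{SubStoch}$ (resp. $\to\mathbf{QuasiSubStoch}$) mapping $u_A$ to $\mathbf{1}_{\Lambda_A}$, mapping each closed diagram to its probability, and preserving convex combinations and coarse-graining relations. A quasiprobabilistic model is positive if all matrix entries of all maps in its image are nonnegative, i.e. its image lies in $\mathbf{SubStoch}$. *)

theory Defs
  imports Complex_Main
begin

text \<open>A system R^Lambda with |Lambda| = n is represented by its index set {0..<n}.
  A linear map R^{Lambda} -> R^{Lambda'} (n = |Lambda|, m = |Lambda'|) is a matrix
  M with M i j = f(i | j), required to vanish outside the index range.
  The composite R^{n} (x) R^{n'} is R^{n*n'} with index (a,b) encoded as a*n'+b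
  (Kronecker ordering), so that tensoring is strictly associative.\<close>

type_synonym mat = "nat \<Rightarrow> nat \<Rightarrow> real"

definition wf_mat :: "nat \<Rightarrow> nat \<Rightarrow> mat \<Rightarrow> bool" where
  "wf_mat n m M \<longleftrightarrow> (\<forall>i j. (m \<le> i \<or> n \<le> j) \<longrightarrow> M i j = 0)"

definition mcomp :: "nat \<Rightarrow> mat \<Rightarrow> mat \<Rightarrow> mat" where
  "mcomp k M N = (\<lambda>i j. \<Sum>l<k. M i l * N l j)"

definition mtens :: "nat \<Rightarrow> nat \<Rightarrow> mat \<Rightarrow> mat \<Rightarrow> mat" where
  "mtens m2 n2 M N = (\<lambda>i j. M (i div m2) (j div n2) * N (i mod m2) (j mod n2))"

definition mid :: "nat \<Rightarrow> mat" where
  "mid n = (\<lambda>i j. if i = j \<and> i < n then 1 else 0)"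

definition ones :: "nat \<Rightarrow> mat" where
  "ones n = (\<lambda>i j. if i = 0 \<and> j < n then 1 else 0)"

definition mconv :: "real \<Rightarrow> mat \<Rightarrow> mat \<Rightarrow> mat" where
  "mconv w M N = (\<lambda>i j. w * M i j + (1 - w) * N i j)"

definition madd :: "mat \<Rightarrow> mat \<Rightarrow> mat" where
  "madd M N = (\<lambda>i j. M i j + N i j)"

definition substoch :: "nat \<Rightarrow> nat \<Rightarrow> mat \<Rightarrow> bool" where
  "substoch n m M \<longleftrightarrow> (\<forall>i j. 0 \<le> M i j \<and> M i j \<le> 1) \<and> (\<forall>j<n. (\<Sum>i<m. M i j) \<le> 1)"

definition nonneg_mat :: "mat \<Rightarrow> bool" where
  "nonneg_mat M \<longleftrightarrow> (\<forall>i j. 0 \<le> M i j)"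

record ('s, 'p) optheory =
  tens :: "'s \<Rightarrow> 's \<Rightarrow> 's"
  unitS :: 's
  procs :: "'p set"
  pdom :: "'p \<Rightarrow> 's"
  pcod :: "'p \<Rightarrow> 's"
  seq :: "'p \<Rightarrow> 'p \<Rightarrow> 'p"   \<comment> \<open>seq T S = T \<circ> S\<close>
  par :: "'p \<Rightarrow> 'p \<Rightarrow> 'p"
  idp :: "'s \<Rightarrow> 'p"
  prob :: "'p \<Rightarrow> real"
  det_eff :: "'p set"
  mixt :: "'p \<Rightarrow> real \<Rightarrow> 'p \<Rightarrow> 'p \<Rightarrow> bool" \<comment> \<open>T1 is the w-mixture of T2, T3\<close>
  cgr :: "'p \<Rightarrow> 'p \<Rightarrow> 'p \<Rightarrow> bool"  \<comment> \<open>T is the coarse-graining of T2, T3\<close>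

definition has_type :: "('s,'p) optheory \<Rightarrow> 'p \<Rightarrow> 's \<Rightarrow> 's \<Rightarrow> bool" where
  "has_type Op T A B \<longleftrightarrow> T \<in> procs Op \<and> pdom Op T = A \<and> pcod Op T = B"

definition closed_diag :: "('s,'p) optheory \<Rightarrow> 'p \<Rightarrow> bool" where
  "closed_diag Op D \<longleftrightarrow> has_type Op D (unitS Op) (unitS Op)"

definition is_tester :: "('s,'p) optheory \<Rightarrow> 's \<Rightarrow> 's \<Rightarrow> 'p \<times> 'p \<times> 's \<Rightarrow> bool" where
  "is_tester Op A B \<tau> \<longleftrightarrow> (case \<tau> of (s, e, W) \<Rightarrow>
     has_type Op s (unitS Op) (tens Op A W) \<and> has_type Op e (tens Op B W) (unitS Op))"

definition apply_tester :: "('s,'p) optheory \<Rightarrow> 'p \<times> 'p \<times> 's \<Rightarrow> 'p \<Rightarrow> 'p" where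
  "apply_tester Op \<tau> T = (case \<tau> of (s, e, W) \<Rightarrow>
     seq Op e (seq Op (par Op T (idp Op W)) s))"

definition opeq :: "('s,'p) optheory \<Rightarrow> 'p \<Rightarrow> 'p \<Rightarrow> bool" where
  "opeq Op T T' \<longleftrightarrow> T \<in> procs Op \<and> T' \<in> procs Op \<and>
     pdom Op T = pdom Op T' \<and> pcod Op T = pcod Op T' \<and>
     (\<forall>\<tau>. is_tester Op (pdom Op T) (pcod Op T) \<tau> \<longrightarrow>
        prob Op (apply_tester Op \<tau> T) = prob Op (apply_tester Op \<tau> T'))"

definition process_theory :: "('s,'p) optheory \<Rightarrow> bool" where
  "process_theory Op \<longleftrightarrow>
    (\<forall>T S. T \<in> procs Op \<and> S \<in> procs Op \<and> pdom Op T = pcod Op S \<longrightarrow>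
        has_type Op (seq Op T S) (pdom Op S) (pcod Op T)) \<and>
    (\<forall>T S. T \<in> procs Op \<and> S \<in> procs Op \<longrightarrow>
        has_type Op (par Op T S) (tens Op (pdom Op T) (pdom Op S)) (tens Op (pcod Op T) (pcod Op S))) \<and>
    (\<forall>A. has_type Op (idp Op A) A A)"

definition op_theory :: "('s,'p) optheory \<Rightarrow> bool" where
  "op_theory Op \<longleftrightarrow> process_theory Op \<and>
    \<comment> \<open>probability rule\<close>
    (\<forall>D. closed_diag Op D \<longrightarrow> 0 \<le> prob Op D \<and> prob Op D \<le> 1) \<and>
    (\<forall>D1 D2. closed_diag Op D1 \<and> closed_diag Op D2 \<longrightarrow>
        prob Op (par Op D1 D2) = prob Op D1 * prob Op D2) \<and>
    \<comment> \<open>mixtures: well-behaved and existing for all weights\<close>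
    (\<forall>T1 w T2 T3. mixt Op T1 w T2 T3 \<longrightarrow> 0 \<le> w \<and> w \<le> 1 \<and>
        has_type Op T2 (pdom Op T1) (pcod Op T1) \<and> has_type Op T3 (pdom Op T1) (pcod Op T1) \<and>
        T1 \<in> procs Op \<and>
        (\<forall>\<tau>. is_tester Op (pdom Op T1) (pcod Op T1) \<tau> \<longrightarrow>
           prob Op (apply_tester Op \<tau> T1) =
             w * prob Op (apply_tester Op \<tau> T2) + (1 - w) * prob Op (apply_tester Op \<tau> T3))) \<and>
    (\<forall>w T2 T3 A B. 0 \<le> w \<and> w \<le> 1 \<and> has_type Op T2 A B \<and> has_type Op T3 A B \<longrightarrow>
        (\<exists>T1. has_type Op T1 A B \<and> mixt Op T1 w T2 T3)) \<and>
    \<comment> \<open>coarse-grainings of effects add probabilities\<close>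
    (\<forall>T T2 T3. cgr Op T T2 T3 \<longrightarrow>
        has_type Op T (pdom Op T) (unitS Op) \<and>
        has_type Op T2 (pdom Op T) (unitS Op) \<and> has_type Op T3 (pdom Op T) (unitS Op) \<and>
        (\<forall>\<tau>. is_tester Op (pdom Op T) (unitS Op) \<tau> \<longrightarrow>
           prob Op (apply_tester Op \<tau> T) =
             prob Op (apply_tester Op \<tau> T2) + prob Op (apply_tester Op \<tau> T3))) \<and>
    \<comment> \<open>deterministic effects are effects, and all of them on a system are equivalent\<close>
    (\<forall>d\<in>det_eff Op. has_type Op d (pdom Op d) (unitS Op)) \<and>
    (\<forall>d\<in>det_eff Op. \<forall>d'\<in>det_eff Op. pdom Op d = pdom Op d' \<longrightarrow> opeq Op d d') \<and>
    \<comment> \<open>finite tomography\<close>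
    (\<forall>A B. \<exists>F. finite F \<and> (\<forall>\<tau>\<in>F. is_tester Op A B \<tau>) \<and>
        (\<forall>T T'. has_type Op T A B \<and> has_type Op T' A B \<and>
           (\<forall>\<tau>\<in>F. prob Op (apply_tester Op \<tau> T) = prob Op (apply_tester Op \<tau> T')) \<longrightarrow>
           opeq Op T T'))"

definition ontological_model :: "('s,'p) optheory \<Rightarrow> ('s \<Rightarrow> nat) \<Rightarrow> ('p \<Rightarrow> mat) \<Rightarrow> bool" where
  "ontological_model Op dm \<xi> \<longleftrightarrow>
    \<comment> \<open>diagram preservation\<close>
    (\<forall>A B. dm (tens Op A B) = dm A * dm B) \<and> dm (unitS Op) = 1 \<and>
    (\<forall>T\<in>procs Op. wf_mat (dm (pdom Op T)) (dm (pcod Op T)) (\<xi> T)) \<and>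
    (\<forall>T S. T \<in> procs Op \<and> S \<in> procs Op \<and> pdom Op T = pcod Op S \<longrightarrow>
        \<xi> (seq Op T S) = mcomp (dm (pcod Op S)) (\<xi> T) (\<xi> S)) \<and>
    (\<forall>T S. T \<in> procs Op \<and> S \<in> procs Op \<longrightarrow>
        \<xi> (par Op T S) = mtens (dm (pcod Op S)) (dm (pdom Op S)) (\<xi> T) (\<xi> S)) \<and>
    (\<forall>A. \<xi> (idp Op A) = mid (dm A)) \<and>
    \<comment> \<open>image in SubStoch\<close>
    (\<forall>T\<in>procs Op. substoch (dm (pdom Op T)) (dm (pcod Op T)) (\<xi> T)) \<and>
    \<comment> \<open>deterministic effects go to the all-ones covector\<close>
    (\<forall>d\<in>det_eff Op. \<xi> d = ones (dm (pdom Op d))) \<and>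
    \<comment> \<open>probabilities reproduced\<close>
    (\<forall>D. closed_diag Op D \<longrightarrow> \<xi> D 0 0 = prob Op D) \<and>
    \<comment> \<open>mixtures and coarse-grainings preserved\<close>
    (\<forall>T1 w T2 T3. mixt Op T1 w T2 T3 \<longrightarrow> \<xi> T1 = mconv w (\<xi> T2) (\<xi> T3)) \<and>
    (\<forall>T T2 T3. cgr Op T T2 T3 \<longrightarrow> \<xi> T = madd (\<xi> T2) (\<xi> T3))"

definition noncontextual_ontological_model ::
    "('s,'p) optheory \<Rightarrow> ('s \<Rightarrow> nat) \<Rightarrow> ('p \<Rightarrow> mat) \<Rightarrow> bool" where
  "noncontextual_ontological_model Op dm \<xi> \<longleftrightarrow>
    ontological_model Op dm \<xi> \<and> (\<forall>T T'. opeq Op T T' \<longrightarrow> \<xi> T = \<xi> T')"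

text \<open>Processes of the GPT are the equivalence classes of processes of Op.\<close>

definition cls :: "('s,'p) optheory \<Rightarrow> 'p \<Rightarrow> 'p set" where
  "cls Op T = {T'. opeq Op T T'}"

text \<open>Composition in the GPT is via representatives.\<close>

definition gpt_quasi_model :: "('s,'p) optheory \<Rightarrow> ('s \<Rightarrow> nat) \<Rightarrow> ('p set \<Rightarrow> mat) \<Rightarrow> bool" where
  "gpt_quasi_model Op dm \<xi> \<longleftrightarrow>
    (\<forall>A B. dm (tens Op A B) = dm A * dm B) \<and> dm (unitS Op) = 1 \<and>
    (\<forall>T\<in>procs Op. wf_mat (dm (pdom Op T)) (dm (pcod Op T)) (\<xi> (cls Op T))) \<and>
    (\<forall>T S. T \<in> procs Op \<and> S \<in> procs Op \<and> pdom Op T = pcod Op S \<longrightarrow>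
        \<xi> (cls Op (seq Op T S)) = mcomp (dm (pcod Op S)) (\<xi> (cls Op T)) (\<xi> (cls Op S))) \<and>
    (\<forall>T S. T \<in> procs Op \<and> S \<in> procs Op \<longrightarrow>
        \<xi> (cls Op (par Op T S)) = mtens (dm (pcod Op S)) (dm (pdom Op S)) (\<xi> (cls Op T)) (\<xi> (cls Op S))) \<and>
    (\<forall>A. \<xi> (cls Op (idp Op A)) = mid (dm A)) \<and>
    (\<forall>d\<in>det_eff Op. \<xi> (cls Op d) = ones (dm (pdom Op d))) \<and>
    (\<forall>D. closed_diag Op D \<longrightarrow> \<xi> (cls Op D) 0 0 = prob Op D) \<and>
    \<comment> \<open>convex combinations of classes (as vectors of tester probabilities)\<close>
    (\<forall>T1 w T2 T3. 0 \<le> w \<and> w \<le> 1 \<and> T1 \<in> procs Op \<and>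
        has_type Op T2 (pdom Op T1) (pcod Op T1) \<and> has_type Op T3 (pdom Op T1) (pcod Op T1) \<and>
        (\<forall>\<tau>. is_tester Op (pdom Op T1) (pcod Op T1) \<tau> \<longrightarrow>
           prob Op (apply_tester Op \<tau> T1) =
             w * prob Op (apply_tester Op \<tau> T2) + (1 - w) * prob Op (apply_tester Op \<tau> T3)) \<longrightarrow>
        \<xi> (cls Op T1) = mconv w (\<xi> (cls Op T2)) (\<xi> (cls Op T3))) \<and>
    \<comment> \<open>coarse-graining relations\<close>
    (\<forall>T T2 T3. cgr Op T T2 T3 \<longrightarrow> \<xi> (cls Op T) = madd (\<xi> (cls Op T2)) (\<xi> (cls Op T3)))"

definition gpt_ontological_model :: "('s,'p) optheory \<Rightarrow> ('s \<Rightarrow> nat) \<Rightarrow> ('p set \<Rightarrow> mat) \<Rightarrow> bool" where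
  "gpt_ontological_model Op dm \<xi> \<longleftrightarrow> gpt_quasi_model Op dm \<xi> \<and>
    (\<forall>T\<in>procs Op. substoch (dm (pdom Op T)) (dm (pcod Op T)) (\<xi> (cls Op T)))"

definition gpt_positive_quasi_model :: "('s,'p) optheory \<Rightarrow> ('s \<Rightarrow> nat) \<Rightarrow> ('p set \<Rightarrow> mat) \<Rightarrow> bool" where
  "gpt_positive_quasi_model Op dm \<xi> \<longleftrightarrow> gpt_quasi_model Op dm \<xi> \<and>
    (\<forall>T\<in>procs Op. nonneg_mat (\<xi> (cls Op T)) \<and>
       substoch (dm (pdom Op T)) (dm (pcod Op T)) (\<xi> (cls Op T)))"

end

theory Submission
  imports Defs
begin

lemma opeq_sym: "opeq Op T T' \<Longrightarrow> opeq Op T' T"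
  unfolding opeq_def by auto

lemma opeq_trans: "opeq Op T T' \<Longrightarrow> opeq Op T' T'' \<Longrightarrow> opeq Op T T''"
  unfolding opeq_def by auto

lemma opeq_refl: "T \<in> procs Op \<Longrightarrow> opeq Op T T"
  unfolding opeq_def by auto

lemma cls_eq: assumes "opeq Op T T'" shows "cls Op T = cls Op T'"
proof -
  have "opeq Op T X \<longleftrightarrow> opeq Op T' X" for X
    using opeq_trans[OF assms, of X] opeq_trans[OF opeq_sym[OF assms], of X] by (meson)
  thus ?thesis unfolding cls_def by (intro Collect_cong) simp
qed

lemma op_mix_all:
  assumes "op_theory Op"
  shows "\<forall>T1 w T2 T3. mixt Op T1 w T2 T3 \<longrightarrow> 0 \<le> w \<and> w \<le> 1 \<and>
        has_type Op T2 (pdom Op T1) (pcod Op T1) \<and> has_type Op T3 (pdom Op T1) (pcod Op T1) \<and>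
        T1 \<in> procs Op \<and>
        (\<forall>\<tau>. is_tester Op (pdom Op T1) (pcod Op T1) \<tau> \<longrightarrow>
           prob Op (apply_tester Op \<tau> T1) =
             w * prob Op (apply_tester Op \<tau> T2) + (1 - w) * prob Op (apply_tester Op \<tau> T3))"
  using assms unfolding op_theory_def by (elim conjE) assumption

lemma op_mix:
  assumes "op_theory Op" "mixt Op T1 w T2 T3"
  shows "0 \<le> w \<and> w \<le> 1 \<and>
        has_type Op T2 (pdom Op T1) (pcod Op T1) \<and> has_type Op T3 (pdom Op T1) (pcod Op T1) \<and>
        T1 \<in> procs Op \<and>
        (\<forall>\<tau>. is_tester Op (pdom Op T1) (pcod Op T1) \<tau> \<longrightarrow>
           prob Op (apply_tester Op \<tau> T1) =
             w * prob Op (apply_tester Op \<tau> T2) + (1 - w) * prob Op (apply_tester Op \<tau> T3))"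
  using op_mix_all[OF assms(1), rule_format, OF assms(2)] .

lemma nc_to_gpt:
  assumes op: "op_theory Op" and nc: "noncontextual_ontological_model Op dm \<xi>"
  shows "gpt_ontological_model Op dm (\<lambda>X. \<xi> (SOME T. T \<in> X))"
proof -
  let ?x = "\<lambda>X. \<xi> (SOME T. T \<in> X)"
  note ncu = nc[unfolded noncontextual_ontological_model_def]
  note om = ncu[THEN conjunct1]
  note ncx = ncu[THEN conjunct2]
  note ou = om[unfolded ontological_model_def]
  note opu = op[unfolded op_theory_def]
  note ptu = opu[THEN conjunct1, unfolded process_theory_def]
  have key: "?x (cls Op T) = \<xi> T" if "T \<in> procs Op" for T
  proof -
    have "T \<in> cls Op T" using that opeq_refl unfolding cls_def by auto
    hence "(SOME T'. T' \<in> cls Op T) \<in> cls Op T" by (rule someI)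
    hence "opeq Op T (SOME T'. T' \<in> cls Op T)" unfolding cls_def by auto
    thus ?thesis using ncx by metis
  qed
  have seqp: "\<And>T S. T \<in> procs Op \<Longrightarrow> S \<in> procs Op \<Longrightarrow> pdom Op T = pcod Op S \<Longrightarrow> seq Op T S \<in> procs Op"
    using ptu[THEN conjunct1] unfolding has_type_def by blast
  have parp: "\<And>T S. T \<in> procs Op \<Longrightarrow> S \<in> procs Op \<Longrightarrow> par Op T S \<in> procs Op"
    using ptu[THEN conjunct2, THEN conjunct1] unfolding has_type_def by blast
  have idpp: "\<And>A. idp Op A \<in> procs Op"
    using ptu[THEN conjunct2, THEN conjunct2] unfolding has_type_def by blast
  have detp: "\<And>d. d \<in> det_eff Op \<Longrightarrow> d \<in> procs Op"
    using opu[THEN conjunct2, THEN conjunct2, THEN conjunct2, THEN conjunct2, THEN conjunct2, THEN conjunct2, THEN conjunct1] unfolding has_type_def by blast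
  have cgrp: "\<And>T T2 T3. cgr Op T T2 T3 \<Longrightarrow> T \<in> procs Op \<and> T2 \<in> procs Op \<and> T3 \<in> procs Op"
    using opu[THEN conjunct2, THEN conjunct2, THEN conjunct2, THEN conjunct2, THEN conjunct2, THEN conjunct1] unfolding has_type_def by blast
  have mixex: "\<And>w T2 T3 A B. 0 \<le> w \<Longrightarrow> w \<le> 1 \<Longrightarrow> has_type Op T2 A B \<Longrightarrow> has_type Op T3 A B \<Longrightarrow>
        (\<exists>T1. has_type Op T1 A B \<and> mixt Op T1 w T2 T3)"
    using opu[THEN conjunct2, THEN conjunct2, THEN conjunct2, THEN conjunct2, THEN conjunct1] by blast
  have mixprop: "\<And>T1 w T2 T3. mixt Op T1 w T2 T3 \<Longrightarrow>
        (\<forall>\<tau>. is_tester Op (pdom Op T1) (pcod Op T1) \<tau> \<longrightarrow>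
           prob Op (apply_tester Op \<tau> T1) =
             w * prob Op (apply_tester Op \<tau> T2) + (1 - w) * prob Op (apply_tester Op \<tau> T3))"
    using op_mix[OF op] by blast
  have conv: "?x (cls Op T1) = mconv w (?x (cls Op T2)) (?x (cls Op T3))"
    if h: "0 \<le> w \<and> w \<le> 1 \<and> T1 \<in> procs Op \<and>
        has_type Op T2 (pdom Op T1) (pcod Op T1) \<and> has_type Op T3 (pdom Op T1) (pcod Op T1) \<and>
        (\<forall>\<tau>. is_tester Op (pdom Op T1) (pcod Op T1) \<tau> \<longrightarrow>
           prob Op (apply_tester Op \<tau> T1) =
             w * prob Op (apply_tester Op \<tau> T2) + (1 - w) * prob Op (apply_tester Op \<tau> T3))"
    for T1 w T2 T3
  proof -
    obtain T1' where t1': "has_type Op T1' (pdom Op T1) (pcod Op T1)" "mixt Op T1' w T2 T3"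
      using mixex h by blast
    have "opeq Op T1 T1'" unfolding opeq_def
      using h t1' mixprop[OF t1'(2)] unfolding has_type_def by auto
    hence "\<xi> T1 = \<xi> T1'" using ncx by blast
    also have "\<dots> = mconv w (\<xi> T2) (\<xi> T3)" using ou[THEN conjunct2, THEN conjunct2, THEN conjunct2, THEN conjunct2, THEN conjunct2, THEN conjunct2, THEN conjunct2, THEN conjunct2, THEN conjunct2, THEN conjunct1] t1'(2) by blast
    finally show ?thesis using key h unfolding has_type_def by auto
  qed
  have A: "(\<forall>A B. dm (tens Op A B) = dm A * dm B) \<and> dm (unitS Op) = 1"
    using ou[THEN conjunct1] ou[THEN conjunct2, THEN conjunct1] by blast
  have B: "\<forall>T\<in>procs Op. wf_mat (dm (pdom Op T)) (dm (pcod Op T)) (?x (cls Op T))"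
    using ou[THEN conjunct2, THEN conjunct2, THEN conjunct1] key by simp
  have C: "\<forall>T S. T \<in> procs Op \<and> S \<in> procs Op \<and> pdom Op T = pcod Op S \<longrightarrow>
        ?x (cls Op (seq Op T S)) = mcomp (dm (pcod Op S)) (?x (cls Op T)) (?x (cls Op S))"
  proof (intro allI impI)
    fix T S assume h: "T \<in> procs Op \<and> S \<in> procs Op \<and> pdom Op T = pcod Op S"
    have "\<xi> (seq Op T S) = mcomp (dm (pcod Op S)) (\<xi> T) (\<xi> S)"
      using ou[THEN conjunct2, THEN conjunct2, THEN conjunct2, THEN conjunct1] h by blast
    thus "?x (cls Op (seq Op T S)) = mcomp (dm (pcod Op S)) (?x (cls Op T)) (?x (cls Op S))"
      using h key seqp by simp
  qed
  have D: "\<forall>T S. T \<in> procs Op \<and> S \<in> procs Op \<longrightarrow>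
        ?x (cls Op (par Op T S)) = mtens (dm (pcod Op S)) (dm (pdom Op S)) (?x (cls Op T)) (?x (cls Op S))"
  proof (intro allI impI)
    fix T S assume h: "T \<in> procs Op \<and> S \<in> procs Op"
    have "\<xi> (par Op T S) = mtens (dm (pcod Op S)) (dm (pdom Op S)) (\<xi> T) (\<xi> S)"
      using ou[THEN conjunct2, THEN conjunct2, THEN conjunct2, THEN conjunct2, THEN conjunct1] h by blast
    thus "?x (cls Op (par Op T S)) = mtens (dm (pcod Op S)) (dm (pdom Op S)) (?x (cls Op T)) (?x (cls Op S))"
      using h key parp by simp
  qed
  have E: "\<forall>A. ?x (cls Op (idp Op A)) = mid (dm A)"
    using ou[THEN conjunct2, THEN conjunct2, THEN conjunct2, THEN conjunct2, THEN conjunct2, THEN conjunct1] key idpp by simp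
  have F: "\<forall>d\<in>det_eff Op. ?x (cls Op d) = ones (dm (pdom Op d))"
    using ou[THEN conjunct2, THEN conjunct2, THEN conjunct2, THEN conjunct2, THEN conjunct2, THEN conjunct2, THEN conjunct2, THEN conjunct1] key detp by simp
  have G: "\<forall>D. closed_diag Op D \<longrightarrow> ?x (cls Op D) 0 0 = prob Op D"
    using ou[THEN conjunct2, THEN conjunct2, THEN conjunct2, THEN conjunct2, THEN conjunct2, THEN conjunct2, THEN conjunct2, THEN conjunct2, THEN conjunct1] key unfolding closed_diag_def has_type_def by simp
  have H: "\<forall>T T2 T3. cgr Op T T2 T3 \<longrightarrow> ?x (cls Op T) = madd (?x (cls Op T2)) (?x (cls Op T3))"
  proof (intro allI impI)
    fix T T2 T3 assume h: "cgr Op T T2 T3"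
    have "\<xi> T = madd (\<xi> T2) (\<xi> T3)" using ou[THEN conjunct2, THEN conjunct2, THEN conjunct2, THEN conjunct2, THEN conjunct2, THEN conjunct2, THEN conjunct2, THEN conjunct2, THEN conjunct2, THEN conjunct2] h by blast
    thus "?x (cls Op T) = madd (?x (cls Op T2)) (?x (cls Op T3))" using cgrp[OF h] key by simp
  qed
  have I: "\<forall>T\<in>procs Op. substoch (dm (pdom Op T)) (dm (pcod Op T)) (?x (cls Op T))"
    using ou[THEN conjunct2, THEN conjunct2, THEN conjunct2, THEN conjunct2, THEN conjunct2, THEN conjunct2, THEN conjunct1] key by simp
  show ?thesis
    unfolding gpt_ontological_model_def gpt_quasi_model_def
    apply (intro conjI)
    apply (rule A[THEN conjunct1])
    apply (rule A[THEN conjunct2])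
    apply (rule B)
    apply (rule C)
    apply (rule D)
    apply (rule E)
    apply (rule F)
    apply (rule G)
    apply (intro allI impI)
    apply (rule conv)
    apply assumption
    apply (rule H)
    apply (rule I)
    done
qed

lemma gpt_to_nc:
  assumes op: "op_theory Op" and g: "gpt_ontological_model Op dm \<xi>"
  shows "noncontextual_ontological_model Op dm (\<lambda>T. \<xi> (cls Op T))"
proof -
  have mixprop: "\<And>T1 w T2 T3. mixt Op T1 w T2 T3 \<Longrightarrow> 0 \<le> w \<and> w \<le> 1 \<and>
        has_type Op T2 (pdom Op T1) (pcod Op T1) \<and> has_type Op T3 (pdom Op T1) (pcod Op T1) \<and>
        T1 \<in> procs Op \<and>
        (\<forall>\<tau>. is_tester Op (pdom Op T1) (pcod Op T1) \<tau> \<longrightarrow>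
           prob Op (apply_tester Op \<tau> T1) =
             w * prob Op (apply_tester Op \<tau> T2) + (1 - w) * prob Op (apply_tester Op \<tau> T3))"
    using op_mix[OF op] by blast
  have q: "gpt_quasi_model Op dm \<xi>" and ss: "\<forall>T\<in>procs Op. substoch (dm (pdom Op T)) (dm (pcod Op T)) (\<xi> (cls Op T))"
    using g unfolding gpt_ontological_model_def by auto
  have M: "\<forall>T1 w T2 T3. mixt Op T1 w T2 T3 \<longrightarrow> \<xi> (cls Op T1) = mconv w (\<xi> (cls Op T2)) (\<xi> (cls Op T3))"
  proof (intro allI impI)
    fix T1 w T2 T3 assume h: "mixt Op T1 w T2 T3"
    have "\<forall>T1 w T2 T3. 0 \<le> w \<and> w \<le> 1 \<and> T1 \<in> procs Op \<and>
        has_type Op T2 (pdom Op T1) (pcod Op T1) \<and> has_type Op T3 (pdom Op T1) (pcod Op T1) \<and>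
        (\<forall>\<tau>. is_tester Op (pdom Op T1) (pcod Op T1) \<tau> \<longrightarrow>
           prob Op (apply_tester Op \<tau> T1) =
             w * prob Op (apply_tester Op \<tau> T2) + (1 - w) * prob Op (apply_tester Op \<tau> T3)) \<longrightarrow>
        \<xi> (cls Op T1) = mconv w (\<xi> (cls Op T2)) (\<xi> (cls Op T3))"
      using q unfolding gpt_quasi_model_def by (elim conjE) assumption
    then show "\<xi> (cls Op T1) = mconv w (\<xi> (cls Op T2)) (\<xi> (cls Op T3))"
      using mixprop[OF h] by blast
  qed
  have N: "\<forall>T T'. opeq Op T T' \<longrightarrow> \<xi> (cls Op T) = \<xi> (cls Op T')"
    using cls_eq by metis
  show ?thesis
    unfolding noncontextual_ontological_model_def ontological_model_def
    apply (intro conjI)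
    apply (insert q ss M N, unfold gpt_quasi_model_def, (elim conjE)?, assumption)+
    done
qed

theorem corollary2:
  fixes Op :: "('s, 'p) optheory"
  assumes "op_theory Op"
  shows "((\<exists>dm \<xi>. noncontextual_ontological_model Op dm \<xi>) \<longleftrightarrow>
            (\<exists>dm \<xi>. gpt_ontological_model Op dm \<xi>)) \<and>
         ((\<exists>dm \<xi>. gpt_ontological_model Op dm \<xi>) \<longleftrightarrow>
            (\<exists>dm \<xi>. gpt_positive_quasi_model Op dm \<xi>))"
proof (intro conjI iffI)
  assume "\<exists>dm \<xi>. noncontextual_ontological_model Op dm \<xi>"
  thus "\<exists>dm \<xi>. gpt_ontological_model Op dm \<xi>" using nc_to_gpt[OF assms] by blast
next
  assume "\<exists>dm \<xi>. gpt_ontological_model Op dm \<xi>"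
  thus "\<exists>dm \<xi>. noncontextual_ontological_model Op dm \<xi>" using gpt_to_nc[OF assms] by blast
next
  assume "\<exists>dm \<xi>. gpt_ontological_model Op dm \<xi>"
  thus "\<exists>dm \<xi>. gpt_positive_quasi_model Op dm \<xi>"
    unfolding gpt_ontological_model_def gpt_positive_quasi_model_def substoch_def nonneg_mat_def
    by blast
next
  assume "\<exists>dm \<xi>. gpt_positive_quasi_model Op dm \<xi>"
  thus "\<exists>dm \<xi>. gpt_ontological_model Op dm \<xi>"
    unfolding gpt_ontological_model_def gpt_positive_quasi_model_def by blast
qed

end
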